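(* Let $E,F\subset\mathbb{R}^N$ be measurable sets with $\gamma(E),\gamma(F)\in(0,1)$ such that $$\frac{\gamma(F\triangle E)}{\gamma(F)}\leq\kappa\,\mathcal{A}_\gamma(F)$$ for some $0<\kappa<1/2$. Then $$\mathcal{A}_\gamma(E)\geq\frac{1-2\kappa}{c_\kappa}\mathcal{A}_\gamma(F),\qquad c_\kappa:=\begin{cases}1 & \text{if }\gamma(E\setminus F)=0,\\ 1+2\kappa & \text{if }\gamma(E\setminus F)>0.\end{cases}$$
   Context: $\gamma$ is the standard Gaussian measure on $\mathbb{R}^N$; $\Phi(r)=\gamma_1((-\infty,r))$; for $\omega\in\mathbb{S}^{N-1}$, $r\in\mathbb{R}$, $H_{\omega,r}=\{x:x\cdot\omega<r\}$. For measurable $G$ with $\gamma(G)\in(0,1)$ the Gaussian Fraenkel asymmetry is $\mathcal{A}_\gamma(G):=\min_{\omega\in\mathbb{S}^{N-1}}\gamma(G\triangle H_{\omega,r})/\gamma(G)$ with $r=\Phi^{-1}(\gamma(G))$. *)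

theory Defs
  imports "HOL-Analysis.Analysis"
begin

definition gauss :: "'a::euclidean_space measure" where
  "gauss = density lebesgue
     (\<lambda>x. ennreal ((2 * pi) powr (- real DIM('a) / 2) * exp (- (norm x)\<^sup>2 / 2)))"

definition Phi :: "real \<Rightarrow> real" where
  "Phi r = measure (gauss :: real measure) {..<r}"

definition Phi_inv :: "real \<Rightarrow> real" where
  "Phi_inv p = (THE r. Phi r = p)"

definition halfsp :: "'a::euclidean_space \<Rightarrow> real \<Rightarrow> 'a set" where
  "halfsp \<omega> r = {x. x \<bullet> \<omega> < r}"

definition symdiff :: "'a set \<Rightarrow> 'a set \<Rightarrow> 'a set" where
  "symdiff A B = (A - B) \<union> (B - A)"

text \<open>Gaussian Fraenkel asymmetry (the minimum over the unit sphere is attained,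
  so it coincides with the infimum).\<close>
definition gasym :: "'a::euclidean_space set \<Rightarrow> real" where
  "gasym G = (INF \<omega>\<in>sphere 0 1.
      measure gauss (symdiff G (halfsp \<omega> (Phi_inv (measure gauss G)))) / measure gauss G)"

end

theory Submission
  imports Defs "HOL-Probability.Probability"
begin

lemma Basis_cart: "(Basis :: (real^'n) set) = range (\<lambda>j. axis j 1)"
  unfolding Basis_vec_def by auto

lemma gd_prod:
  fixes x :: "real^'n"
  shows "(2 * pi) powr (- real DIM(real^'n) / 2) * exp (- (norm x)\<^sup>2 / 2)
       = (\<Prod>j\<in>UNIV. std_normal_density (x$j))"
proof -
  have n: "(norm x)\<^sup>2 = (\<Sum>j\<in>UNIV. (x$j)\<^sup>2)"
    by (simp add: norm_eq_sqrt_inner inner_vec_def power2_eq_square abs_of_nonneg sum_nonneg)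
  have e: "exp (- (norm x)\<^sup>2 / 2) = (\<Prod>j\<in>UNIV. exp (- (x$j)\<^sup>2 / 2))"
    by (simp add: n exp_sum[symmetric] sum_negf sum_divide_distrib)
  have c1: "(2 * pi) powr (- (1/2)) = 1 / sqrt (2 * pi)"
    by (simp add: powr_minus_divide powr_half_sqrt)
  have "(2 * pi) powr (- real DIM(real^'n) / 2) = ((2 * pi) powr (- (1/2))) powr real CARD('n)"
    by (simp add: powr_powr)
  also have "\<dots> = ((2 * pi) powr (- (1/2))) ^ CARD('n)"
    by (rule powr_realpow) simp
  also have "\<dots> = (\<Prod>j\<in>(UNIV::'n set). 1 / sqrt (2 * pi))"
    by (simp add: c1)
  finally have c: "(2 * pi) powr (- real DIM(real^'n) / 2) = (\<Prod>j\<in>(UNIV::'n set). 1 / sqrt (2 * pi))" .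
  show ?thesis unfolding e c std_normal_density_def prod.distrib by simp
qed

abbreviation "N1 \<equiv> density lborel std_normal_density"

lemma F1:
  fixes A :: "'n::finite \<Rightarrow> real set"
  assumes A: "\<And>j. A j \<in> sets borel"
  shows "(\<integral>\<^sup>+x. ennreal (\<Prod>j\<in>UNIV. std_normal_density (x$j)) * indicator {x::real^'n. \<forall>j. x$j \<in> A j} x \<partial>lborel)
       = (\<Prod>j\<in>UNIV. emeasure N1 (A j))"
proof -
  define J where "J b = (SOME j. b = axis j (1::real))" for b :: "real^'n"
  have J: "J (axis j 1) = j" for j
    unfolding J_def by (rule some_equality) (auto simp: axis_eq_axis)
  define f where "f b t = std_normal_density t * indicator (A (J b)) t" for b :: "real^'n" and t
  have inj: "inj (\<lambda>j::'n. axis j (1::real))"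
    by (auto simp: inj_def axis_eq_axis)
  have eq: "ennreal (\<Prod>j\<in>UNIV. std_normal_density (x$j)) * indicator {x::real^'n. \<forall>j. x$j \<in> A j} x
     = ennreal (\<Prod>b\<in>Basis. f b (x \<bullet> b))" for x :: "real^'n"
  proof -
    have "(\<Prod>b\<in>Basis. f b (x \<bullet> b)) = (\<Prod>j\<in>UNIV. f (axis j 1) (x \<bullet> axis j 1))"
      unfolding Basis_cart by (subst prod.reindex[OF inj]) simp
    also have "\<dots> = (\<Prod>j\<in>UNIV. std_normal_density (x$j) * indicator (A j) (x$j))"
      by (simp add: f_def J inner_axis)
    also have "\<dots> = (\<Prod>j\<in>UNIV. std_normal_density (x$j)) * indicator {x::real^'n. \<forall>j. x$j \<in> A j} x"
    proof -
      have "(\<Prod>j\<in>UNIV. indicator (A j) (x$j) :: real) = indicator {x::real^'n. \<forall>j. x$j \<in> A j} x"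
      proof (cases "\<forall>j. x$j \<in> A j")
        case True then show ?thesis by simp
      next
        case False then obtain j where "x$j \<notin> A j" by blast
        then have "(\<Prod>j\<in>UNIV. indicator (A j) (x$j) :: real) = 0"
          by (intro prod_zero) (auto intro!: exI[of _ j])
        then show ?thesis using False by simp
      qed
      then show ?thesis by (simp add: prod.distrib)
    qed
    finally show ?thesis
      by (simp add: ennreal_mult' prod_nonneg ennreal_indicator)
  qed
  have fnn: "0 \<le> f b t" for b t by (simp add: f_def)
  have "(\<integral>\<^sup>+x. ennreal (\<Prod>b\<in>Basis. f b (x \<bullet> b)) \<partial>lborel) = (\<integral>\<^sup>+x. (\<Prod>b\<in>Basis. ennreal (f b (x \<bullet> b))) \<partial>lborel)"
    by (simp add: prod_ennreal fnn)
  also have "\<dots> = (\<Prod>b\<in>Basis. (\<integral>\<^sup>+t. f b t \<partial>lborel))"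
    by (rule nn_integral_lborel_prod) (use A in \<open>auto simp: f_def\<close>)
  also have "\<dots> = (\<Prod>j\<in>UNIV. (\<integral>\<^sup>+t. f (axis j 1) t \<partial>lborel))"
    unfolding Basis_cart by (subst prod.reindex[OF inj]) simp
  also have "\<dots> = (\<Prod>j\<in>UNIV. emeasure N1 (A j))"
    using A by (intro prod.cong refl) (simp add: f_def J emeasure_density ennreal_mult' ennreal_indicator)
  finally show ?thesis by (simp add: eq)
qed

definition Mg :: "(real^'n) measure" where
  "Mg = density lborel (\<lambda>x. ennreal (\<Prod>j\<in>UNIV. std_normal_density (x$j)))"

lemma box_borel:
  fixes A :: "'n::finite \<Rightarrow> real set"
  assumes A: "\<And>j. A j \<in> sets borel"
  shows "{x::real^'n. \<forall>j. x$j \<in> A j} \<in> sets borel"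
proof -
  have "{x::real^'n. \<forall>j. x$j \<in> A j} = (\<Inter>j. (\<lambda>x. x$j) -` A j)" by auto
  also have "\<dots> \<in> sets borel"
    using A by (intro sets.finite_INT) (auto intro!: measurable_sets_borel[of _ borel])
  finally show ?thesis .
qed

lemma Mg_box:
  fixes A :: "'n::finite \<Rightarrow> real set"
  assumes A: "\<And>j. A j \<in> sets borel"
  shows "emeasure (Mg :: (real^'n) measure) {x. \<forall>j. x$j \<in> A j} = (\<Prod>j\<in>UNIV. emeasure N1 (A j))"
  unfolding Mg_def using box_borel[OF A]
  by (subst emeasure_density) (auto simp: F1[OF A])

lemma N1_UNIV: "emeasure N1 UNIV = 1"
proof -
  interpret prob_space N1 by (rule prob_space_normal_density) simp
  show ?thesis using emeasure_space_1 by simp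
qed

lemma prob_Mg: "prob_space (Mg :: (real^'n) measure)"
proof
  have "emeasure (Mg :: (real^'n) measure) {x. \<forall>j. x$j \<in> (UNIV::real set)} = 1"
    by (subst Mg_box) (auto simp: N1_UNIV)
  then show "emeasure (Mg :: (real^'n) measure) (space Mg) = 1"
    by (simp add: Mg_def)
qed

lemma sets_Mg[simp]: "sets (Mg :: (real^'n) measure) = sets borel"
  by (simp add: Mg_def)

lemma space_Mg[simp]: "space (Mg :: (real^'n) measure) = UNIV"
  by (simp add: Mg_def)

lemma measurable_Mg[simp]: "measurable (Mg :: (real^'n) measure) N = measurable borel N"
  by (rule measurable_cong_sets) auto

lemma distr_coord: "distr (Mg :: (real^'n) measure) lborel (\<lambda>x. x$j) = N1"
proof (rule measure_eqI)
  show "sets (distr (Mg :: (real^'n) measure) lborel (\<lambda>x. x$j)) = sets N1" by simp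
  fix A assume "A \<in> sets (distr (Mg :: (real^'n) measure) lborel (\<lambda>x. x$j))"
  then have A: "A \<in> sets borel" by simp
  have "emeasure (distr (Mg :: (real^'n) measure) lborel (\<lambda>x. x$j)) A
      = emeasure (Mg :: (real^'n) measure) {x. \<forall>k. x$k \<in> (if k = j then A else UNIV)}"
    using A by (subst emeasure_distr) (auto intro!: arg_cong2[where f=emeasure])
  also have "\<dots> = (\<Prod>k\<in>UNIV. emeasure N1 (if k = j then A else UNIV))"
    using A by (subst Mg_box) auto
  also have "\<dots> = (\<Prod>k\<in>UNIV. if k = j then emeasure N1 A else 1)"
    by (intro prod.cong refl) (auto simp: N1_UNIV)
  also have "\<dots> = emeasure N1 A" by (subst prod.delta) auto
  finally show "emeasure (distr (Mg :: (real^'n) measure) lborel (\<lambda>x. x$j)) A = emeasure N1 A" .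
qed

lemma distributed_coord: "distributed (Mg :: (real^'n) measure) lborel (\<lambda>x. x$j) (\<lambda>t. ennreal (normal_density 0 1 t))"
  unfolding distributed_def by (simp add: distr_coord)

lemma indep_coord: "prob_space.indep_vars (Mg :: (real^'n) measure) (\<lambda>_. borel) (\<lambda>j x. x$j) UNIV"
proof -
  interpret P: prob_space "Mg :: (real^'n) measure" by (rule prob_Mg)
  interpret S: product_sigma_finite "\<lambda>_::'n. N1"
    unfolding product_sigma_finite_def
    using prob_space_normal_density[of 1 0] prob_space_imp_sigma_finite by auto
  have d: "distr (Mg :: (real^'n) measure) borel (\<lambda>x. x$j) = N1" for j
    by (subst distr_coord[symmetric, of j]) (rule distr_cong, auto)
  have "distr (Mg :: (real^'n) measure) (\<Pi>\<^sub>M j\<in>UNIV. borel) (\<lambda>x. \<lambda>j\<in>UNIV. x$j) = (\<Pi>\<^sub>M j\<in>UNIV. N1)"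
  proof (rule S.PiM_eqI)
    show "sets (distr (Mg :: (real^'n) measure) (\<Pi>\<^sub>M j\<in>UNIV. borel) (\<lambda>x. \<lambda>j\<in>UNIV. x$j)) = sets (\<Pi>\<^sub>M j\<in>UNIV. N1)"
      unfolding sets_distr by (rule sets_PiM_cong) auto
    fix A :: "'n \<Rightarrow> real set" assume A: "\<And>i. i \<in> UNIV \<Longrightarrow> A i \<in> sets N1"
    then have A': "\<And>i. A i \<in> sets borel" by simp
    have PA: "Pi\<^sub>E UNIV A \<in> sets (\<Pi>\<^sub>M j\<in>UNIV. (borel :: real measure))"
      by (rule sets_PiM_I_finite) (auto simp: A')
    have meas: "(\<lambda>x. \<lambda>j\<in>UNIV. x$j) \<in> measurable (Mg :: (real^'n) measure) (\<Pi>\<^sub>M j\<in>UNIV. (borel :: real measure))"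
      by (subst measurable_Mg) measurable
    have pre: "(\<lambda>x. \<lambda>j\<in>UNIV. x$j) -` Pi\<^sub>E UNIV A \<inter> space (Mg :: (real^'n) measure) = {x. \<forall>j. x$j \<in> A j}"
      by (auto simp: PiE_iff)
    have "emeasure (distr (Mg :: (real^'n) measure) (\<Pi>\<^sub>M j\<in>UNIV. borel) (\<lambda>x. \<lambda>j\<in>UNIV. x$j)) (Pi\<^sub>E UNIV A)
        = emeasure (Mg :: (real^'n) measure) {x. \<forall>j. x$j \<in> A j}"
      unfolding pre[symmetric] by (rule emeasure_distr[OF meas PA])
    also have "\<dots> = (\<Prod>j\<in>UNIV. emeasure N1 (A j))" by (rule Mg_box[OF A'])
    finally show "emeasure (distr (Mg :: (real^'n) measure) (\<Pi>\<^sub>M j\<in>UNIV. borel) (\<lambda>x. \<lambda>j\<in>UNIV. x$j)) (Pi\<^sub>E UNIV A)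
        = (\<Prod>j\<in>UNIV. emeasure N1 (A j))" .
  qed simp
  then show ?thesis
    by (subst P.indep_vars_iff_distr_eq_PiM) (auto simp: d)
qed

lemma halfspace_Mg:
  fixes \<omega> :: "real^'n"
  assumes "norm \<omega> = 1"
  shows "emeasure (Mg :: (real^'n) measure) {x. x \<bullet> \<omega> < r} = emeasure N1 {..<r}"
proof -
  interpret P: prob_space "Mg :: (real^'n) measure" by (rule prob_Mg)
  define I where "I = {j. \<omega>$j \<noteq> 0}"
  have "I \<noteq> {}"
  proof
    assume "I = {}"
    then have "\<omega> = 0" by (auto simp: I_def vec_eq_iff)
    then show False using assms by simp
  qed
  have ind: "P.indep_vars (\<lambda>_. borel) (\<lambda>j x. \<omega>$j * x$j) I"
    by (rule P.indep_vars_subset[OF P.indep_vars_compose2[OF indep_coord]]) auto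
  have dist: "distributed Mg lborel (\<lambda>x. \<omega>$j * x$j) (normal_density 0 \<bar>\<omega>$j\<bar>)" if "j \<in> I" for j
    using P.normal_density_affine[OF distributed_coord[of j], of "\<omega>$j" 0] that by (simp add: I_def)
  have "distributed Mg lborel (\<lambda>x. \<Sum>j\<in>I. \<omega>$j * x$j) (normal_density (\<Sum>j\<in>I. 0) (sqrt (\<Sum>j\<in>I. \<bar>\<omega>$j\<bar>\<^sup>2)))"
    by (rule P.sum_indep_normal[OF _ \<open>I \<noteq> {}\<close> ind _ dist]) (auto simp: I_def)
  moreover have "(\<Sum>j\<in>I. \<bar>\<omega>$j\<bar>\<^sup>2) = 1"
  proof -
    have "(\<Sum>j\<in>I. \<bar>\<omega>$j\<bar>\<^sup>2) = (\<Sum>j\<in>I. (\<omega>$j)\<^sup>2)" by simp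
    also have "\<dots> = (\<Sum>j\<in>UNIV. (\<omega>$j)\<^sup>2)"
      by (rule sum.mono_neutral_left) (auto simp: I_def)
    also have "\<dots> = (norm \<omega>)\<^sup>2"
      by (simp add: norm_eq_sqrt_inner inner_vec_def power2_eq_square abs_of_nonneg sum_nonneg)
    finally show ?thesis using assms by simp
  qed
  moreover have "(\<Sum>j\<in>I. \<omega>$j * x$j) = x \<bullet> \<omega>" for x :: "real^'n"
  proof -
    have "(\<Sum>j\<in>I. \<omega>$j * x$j) = (\<Sum>j\<in>UNIV. \<omega>$j * x$j)"
      by (rule sum.mono_neutral_left) (auto simp: I_def)
    then show ?thesis by (simp add: inner_vec_def mult.commute)
  qed
  ultimately have D: "distributed Mg lborel (\<lambda>x. x \<bullet> \<omega>) (\<lambda>t. ennreal (normal_density 0 1 t))"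
    by simp
  have "emeasure (Mg :: (real^'n) measure) {x. x \<bullet> \<omega> < r} = emeasure Mg ((\<lambda>x. x \<bullet> \<omega>) -` {..<r} \<inter> space Mg)"
    by (intro arg_cong[where f="emeasure Mg"]) auto
  also have "\<dots> = (\<integral>\<^sup>+t. ennreal (normal_density 0 1 t) * indicator {..<r} t \<partial>lborel)"
    by (rule distributed_emeasure[OF D]) simp
  also have "\<dots> = emeasure N1 {..<r}"
    by (subst emeasure_density) auto
  finally show ?thesis .
qed

lemma gauss_dens_meas:
  "(\<lambda>x::'a::euclidean_space. ennreal ((2 * pi) powr (- real DIM('a) / 2) * exp (- (norm x)\<^sup>2 / 2))) \<in> borel_measurable borel"
  by measurable

lemma gauss_dens_meas_leb:
  "(\<lambda>x::'a::euclidean_space. ennreal ((2 * pi) powr (- real DIM('a) / 2) * exp (- (norm x)\<^sup>2 / 2))) \<in> borel_measurable lebesgue"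
  by (rule measurable_completion) (simp add: gauss_dens_meas)

lemma emeasure_gauss_borel:
  assumes A: "A \<in> sets borel"
  shows "emeasure (gauss :: ('a::euclidean_space) measure) A
     = (\<integral>\<^sup>+x. ennreal ((2 * pi) powr (- real DIM('a) / 2) * exp (- (norm x)\<^sup>2 / 2)) * indicator A x \<partial>lborel)"
proof -
  have A': "A \<in> sets lebesgue" using A by simp
  have "emeasure (gauss :: ('a::euclidean_space) measure) A
     = (\<integral>\<^sup>+x. ennreal ((2 * pi) powr (- real DIM('a) / 2) * exp (- (norm x)\<^sup>2 / 2)) * indicator A x \<partial>lebesgue)"
    unfolding gauss_def by (rule emeasure_density[OF gauss_dens_meas_leb A'])
  also have "\<dots> = (\<integral>\<^sup>+x. ennreal ((2 * pi) powr (- real DIM('a) / 2) * exp (- (norm x)\<^sup>2 / 2)) * indicator A x \<partial>lborel)"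
    by (rule nn_integral_completion)
  finally show ?thesis .
qed

lemma gauss_Mg:
  assumes A: "A \<in> sets borel"
  shows "emeasure (gauss :: (real^'n) measure) A = emeasure Mg A"
proof -
  have mb: "(\<lambda>x::real^'n. ennreal (\<Prod>j\<in>UNIV. std_normal_density (x$j))) \<in> borel_measurable lborel"
    by measurable
  have A'': "A \<in> sets lborel" using A by simp
  show ?thesis
    unfolding emeasure_gauss_borel[OF A] Mg_def gd_prod by (rule emeasure_density[OF mb A'', symmetric])
qed

lemma sets_gauss[simp]: "sets (gauss :: ('a::euclidean_space) measure) = sets lebesgue"
  by (simp add: gauss_def)

lemma space_gauss[simp]: "space (gauss :: ('a::euclidean_space) measure) = UNIV"
  by (simp add: gauss_def)

lemma prob_gauss: "prob_space (gauss :: (real^'n) measure)"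
proof
  interpret P: prob_space "Mg :: (real^'n) measure" by (rule prob_Mg)
  show "emeasure (gauss :: (real^'n) measure) (space gauss) = 1"
    using gauss_Mg[of "UNIV :: (real^'n) set"] P.emeasure_space_1 by simp
qed

lemma gauss_halfsp:
  fixes \<omega> :: "real^'n"
  assumes "norm \<omega> = 1"
  shows "measure (gauss :: (real^'n) measure) (halfsp \<omega> r) = measure N1 {..<r}"
proof -
  have "halfsp \<omega> r \<in> sets borel"
    unfolding halfsp_def by measurable
  then show ?thesis
    unfolding measure_def using gauss_Mg[of "halfsp \<omega> r"] halfspace_Mg[OF assms] by (simp add: halfsp_def)
qed

lemma Phi_N1: "Phi r = measure N1 {..<r}"
proof -
  have eq: "(2 * pi) powr (- real DIM(real) / 2) * exp (- (norm x)\<^sup>2 / 2) = std_normal_density x" for x :: real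
    by (simp add: std_normal_density_def powr_minus_divide powr_half_sqrt)
  have mb: "(\<lambda>x::real. ennreal (std_normal_density x)) \<in> borel_measurable lborel"
    by measurable
  have "emeasure (gauss :: real measure) {..<r} = emeasure N1 {..<r}"
    unfolding emeasure_gauss_borel[OF lessThan_borel[of r], unfolded eq]
    by (rule emeasure_density[symmetric]) auto
  then show ?thesis unfolding Phi_def measure_def by simp
qed

lemma real_distribution_N1: "real_distribution N1"
  unfolding real_distribution_def real_distribution_axioms_def
  using prob_space_normal_density[of 1 0] by simp

lemma N1_single: "emeasure N1 {x} = 0"
proof -
  have "emeasure N1 {x} = (\<integral>\<^sup>+t. ennreal (std_normal_density t) * indicator {x} t \<partial>lborel)"
    by (subst emeasure_density) auto
  also have "\<dots> = (\<integral>\<^sup>+t. ennreal (std_normal_density x) * indicator {x} t \<partial>lborel)"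
    by (intro nn_integral_cong) (auto simp: indicator_def)
  also have "\<dots> = 0" by simp
  finally show ?thesis .
qed

lemma Phi_cdf: "Phi r = cdf N1 r"
proof -
  interpret real_distribution N1 by (rule real_distribution_N1)
  have "measure N1 {..r} = measure N1 ({..<r} \<union> {r})" by (intro arg_cong[where f="measure N1"]) auto
  also have "\<dots> = measure N1 {..<r} + measure N1 {r}"
    by (rule finite_measure_Union) auto
  also have "measure N1 {r} = 0" using N1_single by (simp add: measure_def)
  finally show ?thesis by (simp add: Phi_N1 cdf_def)
qed

lemma Phi_strict:
  assumes "r < s" shows "Phi r < Phi s"
proof -
  interpret real_distribution N1 by (rule real_distribution_N1)
  define c where "c = 1 / sqrt (2 * pi) * exp (- (r\<^sup>2 + s\<^sup>2) / 2)"
  have c: "c > 0" by (simp add: c_def)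
  have bound: "ennreal c * indicator {r<..s} t \<le> ennreal (std_normal_density t) * indicator {r<..s} t" for t
  proof (cases "t \<in> {r<..s}")
    case True
    then have tin: "r < t" "t \<le> s" by auto
    have "t\<^sup>2 \<le> r\<^sup>2 + s\<^sup>2"
    proof (cases "t \<ge> 0")
      case t0: True
      then have "t * t \<le> s * s" using tin by (intro mult_mono) auto
      moreover have "0 \<le> r * r" by simp
      ultimately show ?thesis unfolding power2_eq_square by linarith
    next
      case t0: False
      then have "(-t) * (-t) \<le> (-r) * (-r)" using tin by (intro mult_mono) auto
      moreover have "0 \<le> s * s" by simp
      ultimately show ?thesis unfolding power2_eq_square by linarith
    qed
    then have "exp (- (r\<^sup>2 + s\<^sup>2) / 2) \<le> exp (- t\<^sup>2 / 2)" by simp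
    then have "c \<le> std_normal_density t"
      unfolding c_def std_normal_density_def by (intro mult_left_mono) auto
    then show ?thesis using True by simp
  qed simp
  have "(\<integral>\<^sup>+t. ennreal c * indicator {r<..s} t \<partial>lborel) = ennreal c * emeasure lborel {r<..s}"
    by (rule nn_integral_cmult_indicator) simp
  also have "\<dots> = ennreal c * ennreal (s - r)" using assms by simp
  also have "\<dots> = ennreal (c * (s - r))" using c assms by (simp add: ennreal_mult)
  finally have "ennreal (c * (s - r)) = (\<integral>\<^sup>+t. ennreal c * indicator {r<..s} t \<partial>lborel)" by simp
  also have "\<dots> \<le> (\<integral>\<^sup>+t. ennreal (std_normal_density t) * indicator {r<..s} t \<partial>lborel)"
    by (intro nn_integral_mono bound)
  also have "\<dots> = emeasure N1 {r<..s}"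
    by (subst emeasure_density) auto
  finally have le: "ennreal (c * (s - r)) \<le> emeasure N1 {r<..s}" .
  have "0 < c * (s - r)" using assms c by simp
  then have "0 < ennreal (c * (s - r))" by simp
  then have "0 < emeasure N1 {r<..s}" using le by (rule less_le_trans)
  then have "0 < measure N1 {r<..s}"
    by (simp add: emeasure_eq_measure)
  then show ?thesis using cdf_diff_eq[OF assms] by (simp add: Phi_cdf)
qed

lemma Phi_Phi_inv:
  assumes "0 < p" "p < 1" shows "Phi (Phi_inv p) = p"
proof -
  interpret real_distribution N1 by (rule real_distribution_N1)
  have cont: "isCont Phi x" for x
    unfolding Phi_cdf[abs_def] using isCont_cdf N1_single by (simp add: measure_def)
  have "eventually (\<lambda>x. Phi x < p) at_bot"
    using order_tendstoD(2)[OF cdf_lim_at_bot assms(1)] by (simp add: Phi_cdf[abs_def])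
  then obtain r1 where r1: "Phi r1 < p" by (auto simp: eventually_at_bot_linorder)
  have "eventually (\<lambda>x. p < Phi x) at_top"
    using order_tendstoD(1)[OF cdf_lim_at_top_prob assms(2)] by (simp add: Phi_cdf[abs_def])
  then obtain r2 where r2: "p < Phi r2" by (auto simp: eventually_at_top_linorder)
  have "r1 \<le> r2"
  proof (rule ccontr)
    assume "\<not> r1 \<le> r2"
    then have "Phi r2 < Phi r1" by (intro Phi_strict) simp
    then show False using r1 r2 by simp
  qed
  then obtain r where r: "Phi r = p"
    using IVT'[of Phi r1 p r2] r1 r2 cont by (auto intro!: continuous_at_imp_continuous_on)
  have "Phi_inv p = r"
    unfolding Phi_inv_def
  proof (rule the_equality)
    fix r' assume "Phi r' = p"
    then show "r' = r" using r Phi_strict by (metis linorder_neq_iff less_irrefl)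
  qed (rule r)
  then show ?thesis using r by simp
qed

lemma halfsp_sets[simp]: "halfsp (\<omega>::real^'n) r \<in> sets (gauss :: (real^'n) measure)"
proof -
  have "halfsp \<omega> r \<in> sets borel" unfolding halfsp_def by measurable
  then show ?thesis by simp
qed

lemma halfsp_leb[simp]: "halfsp (\<omega>::real^'n) r \<in> sets lebesgue"
  using halfsp_sets[of \<omega> r] by simp

lemma halfsp_measure:
  assumes "\<omega> \<in> sphere (0::real^'n) 1" "0 < p" "p < 1"
  shows "measure (gauss :: (real^'n) measure) (halfsp \<omega> (Phi_inv p)) = p"
  using assms gauss_halfsp[of \<omega> "Phi_inv p"] Phi_N1[of "Phi_inv p"] Phi_Phi_inv[of p] by simp

lemma halfsp_mono: "r \<le> s \<Longrightarrow> halfsp \<omega> r \<subseteq> halfsp \<omega> s"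
  by (auto simp: halfsp_def)

theorem lemma4p2:
  fixes E F :: "(real ^ 'n) set" and \<kappa> :: real
  assumes "E \<in> sets lebesgue" and "F \<in> sets lebesgue"
    and "0 < measure gauss E" and "measure gauss E < 1"
    and "0 < measure gauss F" and "measure gauss F < 1"
    and "0 < \<kappa>" and "\<kappa> < 1/2"
    and "measure gauss (symdiff F E) / measure gauss F \<le> \<kappa> * gasym F"
  shows "gasym E \<ge> (1 - 2 * \<kappa>) / (if measure gauss (E - F) = 0 then 1 else 1 + 2 * \<kappa>) * gasym F"
proof -
  interpret P: prob_space "gauss :: (real^'n) measure" by (rule prob_gauss)
  define m where "m = measure (gauss :: (real^'n) measure)"
  define a where "a = m E"
  define b where "b = m F"
  define d where "d = m (symdiff F E)"
  define rE where "rE = Phi_inv a"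
  define rF where "rF = Phi_inv b"
  define gE where "gE \<omega> = m (symdiff E (halfsp \<omega> rE))" for \<omega>
  define gF where "gF \<omega> = m (symdiff F (halfsp \<omega> rF))" for \<omega>
  have a01: "0 < a" "a < 1" and b01: "0 < b" "b < 1" using assms by (auto simp: a_def b_def m_def)
  have Es: "E \<in> sets gauss" and Fs: "F \<in> sets gauss" using assms by auto
  have AE: "gasym E = (INF \<omega>\<in>sphere 0 1. gE \<omega> / a)"
    unfolding gasym_def gE_def rE_def a_def m_def ..
  have AF: "gasym F = (INF \<omega>\<in>sphere 0 1. gF \<omega> / b)"
    unfolding gasym_def gF_def rF_def b_def m_def ..
  have sph: "sphere (0::real^'n) 1 \<noteq> {}"
    using norm_axis_1[of undefined] by (metis mem_sphere_0 empty_iff)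
  then obtain \<omega>0 :: "real^'n" where \<omega>0: "\<omega>0 \<in> sphere 0 1" by blast
  have gF_nn: "0 \<le> gF \<omega>" for \<omega> by (simp add: gF_def m_def)
  have bdd: "bdd_below ((\<lambda>\<omega>. gF \<omega> / b) ` sphere 0 1)"
    using b01 gF_nn by (intro bdd_belowI[of _ 0]) auto
  have AF_le: "gasym F \<le> gF \<omega> / b" if "\<omega> \<in> sphere 0 1" for \<omega>
    unfolding AF by (rule cINF_lower[OF bdd that])
  have AF_nn: "0 \<le> gasym F"
    unfolding AF using sph b01 gF_nn by (intro cINF_greatest) auto
  have symdiff_s: "symdiff A B \<in> sets gauss" if "A \<in> sets gauss" "B \<in> sets gauss" for A B :: "(real^'n) set"
    using that unfolding symdiff_def by auto
  have dEF: "m (E - F) \<le> d" "m (F - E) \<le> d"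
    unfolding d_def m_def using Es Fs symdiff_s
    by (auto intro!: P.finite_measure_mono simp: symdiff_def)
  have aleb: "a \<le> b + m (E - F)"
  proof -
    have "a \<le> m (F \<union> (E - F))" unfolding a_def m_def using Es Fs by (intro P.finite_measure_mono) auto
    also have "\<dots> \<le> b + m (E - F)" unfolding b_def m_def using Es Fs by (intro measure_Un_le) auto
    finally show ?thesis .
  qed
  have blea: "b \<le> a + m (F - E)"
  proof -
    have "b \<le> m (E \<union> (F - E))" unfolding b_def m_def using Es Fs by (intro P.finite_measure_mono) auto
    also have "\<dots> \<le> a + m (F - E)" unfolding a_def m_def using Es Fs by (intro measure_Un_le) auto
    finally show ?thesis .
  qed
  have abd: "\<bar>a - b\<bar> \<le> d" using aleb blea dEF by linarith
  have K4: "gF \<omega> \<le> 2 * b" if "\<omega> \<in> sphere 0 1" for \<omega>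
  proof -
    have "gF \<omega> \<le> m (F \<union> halfsp \<omega> rF)" unfolding gF_def m_def using Fs
      by (intro P.finite_measure_mono) (auto simp: symdiff_def)
    also have "\<dots> \<le> b + m (halfsp \<omega> rF)" unfolding b_def m_def using Fs
      by (intro measure_Un_le) auto
    also have "m (halfsp \<omega> rF) = b" unfolding m_def rF_def using halfsp_measure[OF that b01] by simp
    finally show ?thesis by simp
  qed
  have AF2: "gasym F \<le> 2"
  proof -
    have "gF \<omega>0 / b \<le> 2" using K4[OF \<omega>0] b01 by (simp add: divide_le_eq)
    then show ?thesis using AF_le[OF \<omega>0] by linarith
  qed
  have dle: "d \<le> \<kappa> * b * gasym F"
    using assms(9) b01 unfolding d_def b_def m_def by (simp add: divide_le_eq mult.commute mult.left_commute)
  have K: "(1 - 2 * \<kappa>) * b * gasym F \<le> gE \<omega>" if \<omega>: "\<omega> \<in> sphere 0 1" for \<omega>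
  proof -
    define HE where "HE = halfsp \<omega> rE"
    define HF where "HF = halfsp \<omega> rF"
    have HEm: "m HE = a" unfolding HE_def m_def rE_def using halfsp_measure[OF \<omega> a01] by simp
    have HFm: "m HF = b" unfolding HF_def m_def rF_def using halfsp_measure[OF \<omega> b01] by simp
    have HEs: "HE \<in> sets gauss" and HFs: "HF \<in> sets gauss" unfolding HE_def HF_def by simp_all
    have K1: "m (symdiff HE HF) \<le> \<bar>a - b\<bar>"
    proof (cases "rE \<le> rF")
      case True
      then have sub: "HE \<subseteq> HF" unfolding HE_def HF_def by (rule halfsp_mono)
      then have "symdiff HE HF = HF - HE" by (auto simp: symdiff_def)
      then have "m (symdiff HE HF) = b - a"
        using P.finite_measure_Diff[OF HFs HEs sub] HEm HFm by (simp add: m_def)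
      then show ?thesis by simp
    next
      case False
      then have sub: "HF \<subseteq> HE" unfolding HE_def HF_def by (intro halfsp_mono) simp
      then have "symdiff HE HF = HE - HF" by (auto simp: symdiff_def)
      then have "m (symdiff HE HF) = a - b"
        using P.finite_measure_Diff[OF HEs HFs sub] HEm HFm by (simp add: m_def)
      then show ?thesis by simp
    qed
    have "gF \<omega> \<le> m (symdiff F E \<union> symdiff E HE \<union> symdiff HE HF)"
      unfolding gF_def m_def HF_def[symmetric] using Es Fs HEs HFs symdiff_s
      by (intro P.finite_measure_mono) (auto simp: symdiff_def)
    also have "\<dots> \<le> m (symdiff F E \<union> symdiff E HE) + m (symdiff HE HF)"
      unfolding m_def using Es Fs HEs HFs symdiff_s by (intro measure_Un_le) auto
    also have "\<dots> \<le> d + gE \<omega> + m (symdiff HE HF)"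
      unfolding m_def d_def gE_def HE_def[symmetric] using Es Fs HEs HFs symdiff_s
      by (simp add: measure_Un_le)
    finally have "gF \<omega> \<le> d + gE \<omega> + \<bar>a - b\<bar>" using K1 by simp
    then have "gF \<omega> - 2 * d \<le> gE \<omega>" using abd by simp
    moreover have "b * gasym F \<le> gF \<omega>" using AF_le[OF \<omega>] b01 by (simp add: le_divide_eq mult.commute)
    ultimately show ?thesis using dle by (simp add: algebra_simps)
  qed
  have AEge: "(1 - 2 * \<kappa>) * b * gasym F / a \<le> gasym E"
    unfolding AE using sph a01 K by (intro cINF_greatest) (auto intro: divide_right_mono)
  have fac: "(1 - 2 * \<kappa>) / (if m (E - F) = 0 then 1 else 1 + 2 * \<kappa>) * gasym F \<le> (1 - 2 * \<kappa>) * b * gasym F / a"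
  proof -
    have c: "1 / (if m (E - F) = 0 then 1 else 1 + 2 * \<kappa>) \<le> b / a"
    proof (cases "m (E - F) = 0")
      case True
      then show ?thesis using aleb a01 by simp
    next
      case False
      have k2: "\<kappa> * b * gasym F \<le> \<kappa> * b * 2"
        using AF2 assms(7) b01 by (intro mult_left_mono) auto
      have k3: "b * (1 + 2 * \<kappa>) = b + \<kappa> * b * 2" by (simp add: algebra_simps)
      have "a \<le> b * (1 + 2 * \<kappa>)"
        unfolding k3 using aleb dEF(1) dle k2 by linarith
      then show ?thesis using False a01 assms(7) by (simp add: field_simps)
    qed
    have nn: "0 \<le> (1 - 2 * \<kappa>) * gasym F" using assms(8) AF_nn by simp
    have "(1 - 2 * \<kappa>) / (if m (E - F) = 0 then 1 else 1 + 2 * \<kappa>) * gasym F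
        = ((1 - 2 * \<kappa>) * gasym F) * (1 / (if m (E - F) = 0 then 1 else 1 + 2 * \<kappa>))" by simp
    also have "\<dots> \<le> ((1 - 2 * \<kappa>) * gasym F) * (b / a)" by (rule mult_left_mono[OF c nn])
    also have "\<dots> = (1 - 2 * \<kappa>) * b * gasym F / a" by simp
    finally show ?thesis .
  qed
  show ?thesis using fac AEge unfolding m_def by simp
qed

end
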